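(* Let $R$ be a $*$-ring and $C(R)=\{a\in R\mid ax=xa \text{ for all } x\in R\}$ its center, regarded as a $*$-ring with the restricted involution. Then $R$ is strongly $J$-$*$-clean if and only if (1) $C(R)$ is $J$-$*$-clean, and (2) $R=C(R)+J(R)$.
   Context: All rings are associative with identity. A $*$-ring is a ring $R$ with an involution $*$, i.e. a map $a\mapsto a^*$ with $(a+b)^*=a^*+b^*$, $(ab)^*=b^*a^*$, $(a^* )^*=a$; the center $C(R)$ is closed under $*$. $J(S)$ denotes the Jacobson radical of a ring $S$. A projection is an element $e$ with $e^2=e=e^*$. $R$ is strongly $J$-$*$-clean if every $a\in R$ can be written $a=e+u$ with $e$ a projection, $u\in J(R)$ and $ae=ea$. A $*$-ring $S$ is $J$-$*$-clean if every element of $S$ is the sum of a projection of $S$ and an element of $J(S)$ (no commutation required). *)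

theory Defs
  imports Main
begin

text \<open>A ring R is modelled by the type 'a :: ring_1 (associative, with identity);
  the involution is an explicit function star.\<close>

definition involution :: "('a::ring_1 \<Rightarrow> 'a) \<Rightarrow> bool" where
  "involution star \<longleftrightarrow>
     (\<forall>a b. star (a + b) = star a + star b) \<and>
     (\<forall>a b. star (a * b) = star b * star a) \<and>
     (\<forall>a. star (star a) = a)"

definition center :: "'a::ring_1 set" where
  "center = {a. \<forall>x. a * x = x * a}"

definition is_projection :: "('a::ring_1 \<Rightarrow> 'a) \<Rightarrow> 'a \<Rightarrow> bool" where
  "is_projection star e \<longleftrightarrow> e * e = e \<and> star e = e"

definition left_ideal_in :: "'a::ring_1 set \<Rightarrow> 'a set \<Rightarrow> bool" where
  "left_ideal_in S L \<longleftrightarrow> L \<subseteq> S \<and> 0 \<in> L \<and>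
     (\<forall>x\<in>L. \<forall>y\<in>L. x - y \<in> L) \<and> (\<forall>s\<in>S. \<forall>x\<in>L. s * x \<in> L)"

definition maximal_left_ideal_in :: "'a::ring_1 set \<Rightarrow> 'a set \<Rightarrow> bool" where
  "maximal_left_ideal_in S L \<longleftrightarrow> left_ideal_in S L \<and> L \<noteq> S \<and>
     (\<forall>M. left_ideal_in S M \<and> L \<subseteq> M \<longrightarrow> M = L \<or> M = S)"

text \<open>Jacobson radical of the ring S: intersection of all maximal left ideals
  (equal to S if there are none, i.e. if S is the zero ring).\<close>
definition jacobson :: "'a::ring_1 set \<Rightarrow> 'a set" where
  "jacobson S = S \<inter> \<Inter> {L. maximal_left_ideal_in S L}"

definition strongly_J_star_clean :: "('a::ring_1 \<Rightarrow> 'a) \<Rightarrow> bool" where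
  "strongly_J_star_clean star \<longleftrightarrow>
     (\<forall>a. \<exists>e u. is_projection star e \<and> u \<in> jacobson UNIV \<and> a * e = e * a \<and> a = e + u)"

definition J_star_clean_in :: "('a::ring_1 \<Rightarrow> 'a) \<Rightarrow> 'a set \<Rightarrow> bool" where
  "J_star_clean_in star S \<longleftrightarrow>
     (\<forall>a\<in>S. \<exists>e\<in>S. \<exists>u\<in>jacobson S. is_projection star e \<and> a = e + u)"

end

theory Submission
  imports Defs
begin

definition subr :: "'a::ring_1 set \<Rightarrow> bool" where
  "subr S \<longleftrightarrow> 0 \<in> S \<and> 1 \<in> S \<and> (\<forall>x\<in>S. \<forall>y\<in>S. x - y \<in> S \<and> x + y \<in> S \<and> x * y \<in> S)"

lemma subr_UNIV: "subr (UNIV::'a::ring_1 set)" by (simp add: subr_def)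

lemma subr_center: "subr (center::'a::ring_1 set)"
  unfolding subr_def center_def
proof (intro conjI ballI CollectI allI)
  fix x y z :: 'a assume x: "x \<in> {a. \<forall>x. a * x = x * a}" and y: "y \<in> {a. \<forall>x. a * x = x * a}"
  have hx: "x*z = z*x" and hy: "y*z = z*y" using x y by auto
  show "(x - y) * z = z * (x - y)" using hx hy by (simp add: left_diff_distrib right_diff_distrib)
  show "(x + y) * z = z * (x + y)" using hx hy by (simp add: distrib_left distrib_right)
  have "x*y*z = x*(z*y)" using hy by (simp add: mult.assoc)
  also have "\<dots> = z*(x*y)" using hx by (simp add: mult.assoc[symmetric])
  finally show "(x * y) * z = z * (x * y)" .
qed auto

lemma subrD: assumes "subr S" shows "0 \<in> S" "1 \<in> S"
  "x\<in>S \<Longrightarrow> y\<in>S \<Longrightarrow> x - y \<in> S" "x\<in>S \<Longrightarrow> y\<in>S \<Longrightarrow> x + y \<in> S"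
  "x\<in>S \<Longrightarrow> y\<in>S \<Longrightarrow> x * y \<in> S"
  using assms unfolding subr_def by auto

lemma liD: assumes "left_ideal_in S L" shows "L \<subseteq> S" "0 \<in> L"
  "x\<in>L \<Longrightarrow> y\<in>L \<Longrightarrow> x - y \<in> L" "s\<in>S \<Longrightarrow> x\<in>L \<Longrightarrow> s * x \<in> L"
  using assms unfolding left_ideal_in_def by auto

lemma mliD: "maximal_left_ideal_in S M \<Longrightarrow> left_ideal_in S M"
  "maximal_left_ideal_in S M \<Longrightarrow> M \<noteq> S"
  "maximal_left_ideal_in S M \<Longrightarrow> left_ideal_in S N \<Longrightarrow> M \<subseteq> N \<Longrightarrow> N = M \<or> N = S"
  unfolding maximal_left_ideal_in_def by auto

lemma li_add: "left_ideal_in S L \<Longrightarrow> x\<in>L \<Longrightarrow> y\<in>L \<Longrightarrow> x+y \<in> L"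
proof -
  assume L: "left_ideal_in S L" and x: "x\<in>L" and y: "y\<in>L"
  have "0 - y \<in> L" using L y unfolding left_ideal_in_def by blast
  hence "x - (0 - y) \<in> L" using L x unfolding left_ideal_in_def by blast
  thus ?thesis by simp
qed

lemma li_one: "left_ideal_in S L \<Longrightarrow> 1 \<in> L \<Longrightarrow> L = S"
proof -
  assume L: "left_ideal_in S L" and o: "1 \<in> L"
  have "s \<in> L" if "s \<in> S" for s
  proof -
    have "s * 1 \<in> L" using L o that unfolding left_ideal_in_def by blast
    thus ?thesis by simp
  qed
  moreover have "L \<subseteq> S" using L unfolding left_ideal_in_def by blast
  ultimately show "L = S" by blast
qed

lemma jac_mem: "u \<in> jacobson S \<longleftrightarrow> u \<in> S \<and> (\<forall>M. maximal_left_ideal_in S M \<longrightarrow> u \<in> M)"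
  unfolding jacobson_def by blast

lemma jac_left: "subr S \<Longrightarrow> s\<in>S \<Longrightarrow> u\<in>jacobson S \<Longrightarrow> s*u \<in> jacobson S"
proof -
  assume S: "subr S" and s: "s\<in>S" and u: "u\<in>jacobson S"
  have uS: "u \<in> S" and uM: "\<And>M. maximal_left_ideal_in S M \<Longrightarrow> u \<in> M" using u jac_mem by blast+
  have "s*u \<in> M" if M: "maximal_left_ideal_in S M" for M
  proof -
    have "left_ideal_in S M" using M unfolding maximal_left_ideal_in_def by blast
    thus ?thesis using s uM[OF M] unfolding left_ideal_in_def by blast
  qed
  moreover have "s*u \<in> S" using S s uS unfolding subr_def by blast
  ultimately show ?thesis using jac_mem by blast
qed

lemma jac_add: "subr S \<Longrightarrow> u\<in>jacobson S \<Longrightarrow> v\<in>jacobson S \<Longrightarrow> u+v \<in> jacobson S"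
proof -
  assume S: "subr S" and u: "u\<in>jacobson S" and v: "v\<in>jacobson S"
  have "u + v \<in> S" using S u v jac_mem unfolding subr_def by blast
  moreover have "u + v \<in> M" if M: "maximal_left_ideal_in S M" for M
  proof -
    have "left_ideal_in S M" using M unfolding maximal_left_ideal_in_def by blast
    thus ?thesis using li_add u v M jac_mem by blast
  qed
  ultimately show ?thesis using jac_mem by blast
qed

lemma exists_max:
  fixes S :: "'a::ring_1 set"
  assumes S: "subr S" and I: "left_ideal_in S I" and n1: "1 \<notin> I"
  shows "\<exists>M. maximal_left_ideal_in S M \<and> I \<subseteq> M"
proof -
  define A where "A = {L. left_ideal_in S L \<and> I \<subseteq> L \<and> 1 \<notin> L}"
  have "\<forall>C\<in>chains A. \<exists>U\<in>A. \<forall>X\<in>C. X \<subseteq> U"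
  proof
    fix C assume C: "C \<in> chains A"
    show "\<exists>U\<in>A. \<forall>X\<in>C. X \<subseteq> U"
    proof (cases "C = {}")
      case True thus ?thesis using I n1 unfolding A_def by auto
    next
      case False
      have CA: "C \<subseteq> A" using chainsD2[OF C] .
      have "\<Union>C \<in> A"
        unfolding A_def left_ideal_in_def
      proof (intro CollectI conjI ballI)
        show "\<Union>C \<subseteq> S" using CA unfolding A_def left_ideal_in_def by blast
        show "0 \<in> \<Union>C" using CA False unfolding A_def left_ideal_in_def by blast
        show "I \<subseteq> \<Union>C" using CA False unfolding A_def by blast
        show "1 \<notin> \<Union>C" using CA unfolding A_def by blast
        fix x y assume x: "x \<in> \<Union>C" and y: "y \<in> \<Union>C"
        then obtain L1 L2 where L1: "L1 \<in> C" "x \<in> L1" and L2: "L2 \<in> C" "y \<in> L2" by blast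
        have "L1 \<subseteq> L2 \<or> L2 \<subseteq> L1" using chainsD[OF C L1(1) L2(1)] .
        then obtain L where "L \<in> C" "x \<in> L" "y \<in> L" using L1 L2 by blast
        thus "x - y \<in> \<Union>C" using CA unfolding A_def left_ideal_in_def by blast
      next
        fix s x assume s: "s \<in> S" and x: "x \<in> \<Union>C"
        thus "s * x \<in> \<Union>C" using CA unfolding A_def left_ideal_in_def by blast
      qed
      thus ?thesis by blast
    qed
  qed
  from Zorn_Lemma2[OF this] obtain M where M: "M \<in> A" and mx: "\<forall>X\<in>A. M \<subseteq> X \<longrightarrow> X = M" by blast
  have "maximal_left_ideal_in S M"
    unfolding maximal_left_ideal_in_def
  proof (intro conjI allI impI)
    show "left_ideal_in S M" using M unfolding A_def by blast
    show "M \<noteq> S" using M S unfolding A_def subr_def by blast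
    fix N assume N: "left_ideal_in S N \<and> M \<subseteq> N"
    show "N = M \<or> N = S"
    proof (cases "1 \<in> N")
      case True thus ?thesis using li_one N by blast
    next
      case False
      hence "N \<in> A" using N M unfolding A_def by blast
      thus ?thesis using mx N by blast
    qed
  qed
  thus ?thesis using M unfolding A_def by blast
qed

lemma J_left_inv:
  fixes S :: "'a::ring_1 set"
  assumes S: "subr S" and u: "u \<in> jacobson S"
  shows "\<exists>z\<in>S. z*(1-u) = 1"
proof (rule ccontr)
  assume nz: "\<not> (\<exists>z\<in>S. z*(1-u) = 1)"
  have uS: "u \<in> S" using u jac_mem by blast
  have u1: "1 - u \<in> S" using S uS unfolding subr_def by blast
  define I where "I = {s*(1-u) |s. s\<in>S}"
  have I: "left_ideal_in S I"
    unfolding left_ideal_in_def I_def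
  proof (intro conjI ballI)
    show "{s * (1 - u) |s. s \<in> S} \<subseteq> S" using S u1 unfolding subr_def by blast
    have "0 * (1-u) \<in> {s * (1 - u) |s. s \<in> S}" using S unfolding subr_def by blast
    thus "0 \<in> {s * (1 - u) |s. s \<in> S}" by simp
    fix x y assume "x \<in> {s * (1 - u) |s. s \<in> S}" "y \<in> {s * (1 - u) |s. s \<in> S}"
    then obtain a b where "a\<in>S" "b\<in>S" "x = a*(1-u)" "y = b*(1-u)" by blast
    moreover have "a*(1-u) - b*(1-u) = (a-b)*(1-u)" by (simp add: algebra_simps)
    moreover have "a - b \<in> S" using S \<open>a\<in>S\<close> \<open>b\<in>S\<close> unfolding subr_def by blast
    ultimately show "x - y \<in> {s * (1 - u) |s. s \<in> S}" by blast
  next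
    fix t x assume t: "t \<in> S" and "x \<in> {s * (1 - u) |s. s \<in> S}"
    then obtain a where "a\<in>S" "x = a*(1-u)" by blast
    moreover have "t*a \<in> S" using S t \<open>a\<in>S\<close> unfolding subr_def by blast
    moreover have "t * (a*(1-u)) = (t*a)*(1-u)" by (simp add: mult.assoc)
    ultimately show "t * x \<in> {s * (1 - u) |s. s \<in> S}" by auto
  qed
  have "1 \<notin> I"
  proof
    assume "1 \<in> I"
    then obtain s where "s \<in> S" "1 = s*(1-u)" unfolding I_def by blast
    thus False using nz by auto
  qed
  then obtain M where M: "maximal_left_ideal_in S M" "I \<subseteq> M" using exists_max[OF S I] by blast
  have "1 * (1 - u) \<in> I" using S unfolding I_def subr_def by blast
  hence "1 - u \<in> M" using M(2) by (simp add: subset_iff)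
  moreover have "u \<in> M" using M u jac_mem by blast
  moreover have "left_ideal_in S M" using M(1) unfolding maximal_left_ideal_in_def by blast
  ultimately have "(1 - u) + u \<in> M" using li_add by blast
  hence "1 \<in> M" by simp
  moreover have "left_ideal_in S M" "M \<noteq> S" using M(1) unfolding maximal_left_ideal_in_def by blast+
  ultimately show False using li_one by blast
qed

lemma J_crit:
  fixes S :: "'a::ring_1 set"
  assumes S: "subr S" and uS: "u \<in> S" and h: "\<forall>x\<in>S. \<exists>w\<in>S. w*(1 - x*u) = 1"
  shows "u \<in> jacobson S"
  unfolding jac_mem
proof (intro conjI allI impI uS)
  fix M assume M: "maximal_left_ideal_in S M"
  show "u \<in> M"
  proof (rule ccontr)
    assume nu: "u \<notin> M"
    have MLi: "left_ideal_in S M" using mliD(1)[OF M] .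
    define N where "N = {m + x*u |m x. m\<in>M \<and> x\<in>S}"
    have Nin: "m + x*u \<in> N" if "m \<in> M" "x \<in> S" for m x using that unfolding N_def by blast
    have NE: "\<exists>m x. m\<in>M \<and> x\<in>S \<and> y = m + x*u" if "y \<in> N" for y using that unfolding N_def by blast
    have N: "left_ideal_in S N"
      unfolding left_ideal_in_def
    proof (intro conjI ballI subsetI)
      fix y assume "y \<in> N"
      then obtain m x where h1: "m\<in>M" "x\<in>S" "y = m + x*u" using NE by blast
      have "m \<in> S" using liD(1)[OF MLi] h1(1) by blast
      thus "y \<in> S" using h1 subrD[OF S] uS by simp
    next
      have "0 + 0*u \<in> N" using Nin liD(2)[OF MLi] subrD(1)[OF S] by blast
      thus "0 \<in> N" by simp
    next
      fix x y assume "x \<in> N" "y \<in> N"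
      then obtain m1 x1 m2 x2 where h1: "m1\<in>M" "x1\<in>S" "x = m1 + x1*u" and h2: "m2\<in>M" "x2\<in>S" "y = m2 + x2*u"
        using NE by blast
      have "x - y = (m1 - m2) + (x1 - x2)*u" using h1 h2 by (simp add: algebra_simps)
      moreover have "m1 - m2 \<in> M" using liD(3)[OF MLi] h1 h2 by blast
      moreover have "x1 - x2 \<in> S" using subrD(3)[OF S] h1 h2 by blast
      ultimately show "x - y \<in> N" using Nin by simp
    next
      fix s x assume s: "s\<in>S" and "x \<in> N"
      then obtain m1 x1 where h1: "m1\<in>M" "x1\<in>S" "x = m1 + x1*u" using NE by blast
      have "s * x = s*m1 + (s*x1)*u" using h1 by (simp add: algebra_simps)
      moreover have "s*m1 \<in> M" using liD(4)[OF MLi] h1 s by blast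
      moreover have "s*x1 \<in> S" using subrD(5)[OF S] h1 s by blast
      ultimately show "s * x \<in> N" using Nin by simp
    qed
    have "M \<subseteq> N"
    proof
      fix m assume "m \<in> M"
      hence "m + 0*u \<in> N" using Nin subrD(1)[OF S] by blast
      thus "m \<in> N" by simp
    qed
    hence NMS: "N = M \<or> N = S" using mliD(3)[OF M N] by blast
    have "0 + 1*u \<in> N" using Nin liD(2)[OF MLi] subrD(2)[OF S] by blast
    hence "u \<in> N" by simp
    hence "N = S" using NMS nu by blast
    hence "1 \<in> N" using subrD(2)[OF S] by blast
    then obtain m x where mx: "m\<in>M" "x\<in>S" "1 = m + x*u" using NE by blast
    have "m = 1 - x*u" using mx by (simp add: algebra_simps)
    then obtain w where w: "w\<in>S" "w*m = 1" using h mx by blast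
    hence "1 \<in> M" using liD(4)[OF MLi w(1) mx(1)] by simp
    thus False using li_one[OF MLi] mliD(2)[OF M] by blast
  qed
qed

lemma J_unit:
  fixes u :: "'a::ring_1"
  assumes u: "u \<in> jacobson UNIV"
  shows "\<exists>z. z*(1-u) = 1 \<and> (1-u)*z = 1"
proof -
  obtain v where v: "v*(1-u) = 1" using J_left_inv[OF subr_UNIV u] by blast
  have "(-v)*u \<in> jacobson UNIV" using jac_left[OF subr_UNIV _ u] by blast
  moreover have "(-v)*u = 1 - v" using v by (simp add: algebra_simps)
  ultimately have "1 - v \<in> jacobson UNIV" by simp
  then obtain w where w: "w*(1-(1-v)) = 1" using J_left_inv[OF subr_UNIV] by blast
  hence wv: "w*v = 1" by simp
  have "w = w*(v*(1-u))" using v by simp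
  also have "\<dots> = 1 - u" using wv by (simp add: mult.assoc[symmetric])
  finally have "(1-u)*v = 1" using wv by simp
  thus ?thesis using v by blast
qed

lemma star_props:
  fixes star :: "'a::ring_1 \<Rightarrow> 'a"
  assumes "involution star"
  shows "star 1 = 1" "star (a - b) = star a - star b" "star (a*b) = star b * star a"
    "star (star a) = a"
proof -
  have add: "\<And>a b. star (a + b) = star a + star b" and mul: "\<And>a b. star (a * b) = star b * star a"
    and inv: "\<And>a. star (star a) = a" using assms unfolding involution_def by auto
  have "star (star 1 * 1) = star 1 * star (star 1)" by (rule mul)
  thus "star 1 = 1" using inv by simp
  have "star (a - b) + star b = star a" using add[of "a - b" b] by simp
  thus "star (a - b) = star a - star b" by (simp add: algebra_simps)
  show "star (a*b) = star b * star a" by (rule mul)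
  show "star (star a) = a" by (rule inv)
qed

lemma idem1: fixes e x :: "'a::ring_1" assumes ee: "e*e = e"
  shows "(e + e*x*(1-e))*(e + e*x*(1-e)) = e + e*x*(1-e)"
proof -
  have r1: "e*(e*x) = e*x" for x using ee by (simp add: mult.assoc[symmetric])
  have a: "(1-e)*e = 0" using ee by (simp add: algebra_simps)
  have "(e + e*x*(1-e))*(e + e*x*(1-e)) = e*e + e*x*(1-e)*e + e*(e*x*(1-e)) + e*x*((1-e)*e)*x*(1-e)"
    by (simp add: distrib_left distrib_right mult.assoc)
  also have "\<dots> = e + e*x*(1-e)" using ee a r1 by (simp add: mult.assoc)
  finally show ?thesis .
qed

lemma idem2: fixes e x :: "'a::ring_1" assumes ee: "e*e = e"
  shows "(e + (1-e)*x*e)*(e + (1-e)*x*e) = e + (1-e)*x*e"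
proof -
  have a: "e*(1-e) = 0" using ee by (simp add: algebra_simps)
  have b: "(1-e)*x*e*e = (1-e)*x*e" using ee by (simp add: mult.assoc)
  have "(e + (1-e)*x*e)*(e + (1-e)*x*e) = e*e + e*((1-e)*x*e) + (1-e)*x*e*e + (1-e)*x*(e*(1-e))*x*e"
    by (simp add: distrib_left distrib_right mult.assoc)
  also have "\<dots> = e + (1-e)*x*e" using ee a b by (simp add: mult.assoc[symmetric])
  finally show ?thesis .
qed

lemma side_gen:
  fixes star :: "'a::ring_1 \<Rightarrow> 'a"
  assumes sa: "\<And>a b. star (a + b) = star a + star b" and sd: "\<And>a b. star (a - b) = star a - star b"
   and sm: "\<And>a b. star (a*b) = star b * star a" and s1: "star 1 = 1" and se: "star e = e"
   and ee: "e*e = e"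
   and h1: "star (e + e*x*(1-e)) = e + e*x*(1-e)"
  shows "e*x*(1-e) = 0"
proof -
  have "star (e*x*(1-e)) = (1-e)*(star x*e)" using sm sd s1 se by simp
  hence eq: "e*x*(1-e) = (1-e)*(star x*e)" using h1 sa se by simp
  have "e*(e*x*(1-e)) = e*x*(1-e)" using ee by (simp add: mult.assoc[symmetric])
  moreover have "e*((1-e)*(star x*e)) = 0"
  proof -
    have "e*(1-e) = 0" using ee by (simp add: algebra_simps)
    thus ?thesis by (simp add: mult.assoc[symmetric])
  qed
  ultimately show ?thesis using eq by simp
qed
lemma side_gen2:
  fixes star :: "'a::ring_1 \<Rightarrow> 'a"
  assumes sa: "\<And>a b. star (a + b) = star a + star b" and sd: "\<And>a b. star (a - b) = star a - star b"
   and sm: "\<And>a b. star (a*b) = star b * star a" and s1: "star 1 = 1" and se: "star e = e"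
   and ee: "e*e = e"
   and h1: "star (e + (1-e)*x*e) = e + (1-e)*x*e"
  shows "(1-e)*x*e = 0"
proof -
  have "star ((1-e)*x*e) = e*(star x*(1-e))" using sm sd s1 se by simp
  hence eq: "(1-e)*x*e = e*(star x*(1-e))" using h1 sa se by simp
  have a: "e*(1-e) = 0" using ee by (simp add: algebra_simps)
  have "e*((1-e)*x*e) = 0" using a by (simp add: mult.assoc[symmetric])
  moreover have "e*(e*(star x*(1-e))) = e*(star x*(1-e))" using ee by (simp add: mult.assoc[symmetric])
  ultimately have "e*(star x*(1-e)) = 0" using eq by simp
  thus ?thesis using eq by simp
qed

lemma proj_central:
  fixes star :: "'a::ring_1 \<Rightarrow> 'a"
  assumes inv: "involution star" and sc: "strongly_J_star_clean star"
    and e: "is_projection star e"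
  shows "e \<in> center"
proof -
  have idem_proj: "star f = f" if f: "f*f = f" for f
  proof -
    obtain p u where pu: "is_projection star p" "u \<in> jacobson UNIV" "f*p = p*f" "f = p + u"
      using sc unfolding strongly_J_star_clean_def by blast
    have pp: "p*p = p" using pu unfolding is_projection_def by blast
    have ud: "u = f - p" using pu by simp
    have r1: "f*(f*x) = f*x" for x using f by (simp add: mult.assoc[symmetric])
    have r2: "p*(p*x) = p*x" for x using pp by (simp add: mult.assoc[symmetric])
    have r3: "p*(f*x) = f*(p*x)" for x using pu(3) by (simp add: mult.assoc[symmetric])
    have "u*u*u = u" unfolding ud using f pp pu(3) r1 r2 r3
      by (simp add: algebra_simps)
    hence "(1 - u*u)*u = 0" by (simp add: algebra_simps)
    moreover have "u*u \<in> jacobson UNIV" using jac_left[OF subr_UNIV _ pu(2)] by blast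
    then obtain z where z: "z*(1-u*u) = 1"
      using J_left_inv[OF subr_UNIV] by blast
    have "z*((1 - u*u)*u) = u" unfolding mult.assoc[symmetric] z by simp
    hence "u = 0" using \<open>(1 - u*u)*u = 0\<close> by simp
    thus ?thesis using pu unfolding is_projection_def by simp
  qed
  have ee: "e*e = e" and se: "star e = e" using e unfolding is_projection_def by auto
  have sa: "\<And>a b. star (a + b) = star a + star b" using inv unfolding involution_def by blast
  note sp = star_props[OF inv]
  have side: "e*x*(1-e) = 0" for x
    by (rule side_gen[OF sa sp(2) sp(3) sp(1) se ee idem_proj[OF idem1[OF ee]]])
  have side2: "(1-e)*x*e = 0" for x
    by (rule side_gen2[OF sa sp(2) sp(3) sp(1) se ee idem_proj[OF idem2[OF ee]]])
  show ?thesis unfolding center_def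
  proof
    show "\<forall>x. e*x = x*e"
    proof
      fix x
      have "e*x*(1-e) = e*x - e*x*e" by (simp add: right_diff_distrib)
      hence 1: "e*x = e*x*e" using side[of x] by simp
      have "(1-e)*x*e = x*e - e*x*e" by (simp add: left_diff_distrib)
      hence 2: "x*e = e*x*e" using side2[of x] by simp
      show "e*x = x*e" using 1 2 by simp
    qed
  qed
qed

theorem corollary2p3:
  fixes star :: "'a::ring_1 \<Rightarrow> 'a"
  assumes "involution star"
  shows "strongly_J_star_clean star \<longleftrightarrow>
    (J_star_clean_in star center \<and>
     (\<forall>a::'a. \<exists>c\<in>center. \<exists>j\<in>jacobson UNIV. a = c + j))"
proof
  assume sc: "strongly_J_star_clean star"
  have pc: "is_projection star e \<Longrightarrow> e \<in> center" for e using proj_central[OF assms sc] .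
  show "J_star_clean_in star center \<and> (\<forall>a::'a. \<exists>c\<in>center. \<exists>j\<in>jacobson UNIV. a = c + j)"
  proof
    show "J_star_clean_in star center"
      unfolding J_star_clean_in_def
    proof
      fix a :: 'a assume a: "a \<in> center"
      obtain e u where eu: "is_projection star e" "u \<in> jacobson UNIV" "a = e + u"
        using sc unfolding strongly_J_star_clean_def by blast
      have ec: "e \<in> center" using pc eu by blast
      have "a - e \<in> center" using subrD(3)[OF subr_center a ec] .
      moreover have "a - e = u" using eu(3) by simp
      ultimately have uc: "u \<in> center" by simp
      have "u \<in> jacobson center"
      proof (rule J_crit[OF subr_center uc], rule ballI)
        fix x :: 'a assume x: "x \<in> center"
        have "x*u \<in> jacobson UNIV" using jac_left[OF subr_UNIV _ eu(2)] by blast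
        then obtain z where z: "z*(1-x*u) = 1" "(1-x*u)*z = 1" using J_unit by blast
        have c: "1 - x*u \<in> center" using subrD(2,3,5)[OF subr_center] x uc by blast
        have "z \<in> center" unfolding center_def
        proof (rule CollectI, rule allI)
          fix y
          have "z*y = z*y*((1-x*u)*z)" using z by simp
          also have "\<dots> = z*(y*(1-x*u))*z" by (simp add: mult.assoc)
          also have "\<dots> = z*((1-x*u)*y)*z" using c unfolding center_def by simp
          also have "\<dots> = (z*(1-x*u))*y*z" by (simp add: mult.assoc)
          also have "\<dots> = y*z" using z by simp
          finally show "z*y = y*z" .
        qed
        thus "\<exists>w\<in>center. w*(1-x*u) = 1" using z by blast
      qed
      thus "\<exists>e\<in>center. \<exists>u\<in>jacobson center. is_projection star e \<and> a = e + u"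
        using ec eu by blast
    qed
    show "\<forall>a::'a. \<exists>c\<in>center. \<exists>j\<in>jacobson UNIV. a = c + j"
    proof
      fix a :: 'a
      obtain e u where eu: "is_projection star e" "u \<in> jacobson UNIV" "a = e + u"
        using sc unfolding strongly_J_star_clean_def by blast
      thus "\<exists>c\<in>center. \<exists>j\<in>jacobson UNIV. a = c + j" using pc by blast
    qed
  qed
next
  assume h: "J_star_clean_in star center \<and> (\<forall>a::'a. \<exists>c\<in>center. \<exists>j\<in>jacobson UNIV. a = c + j)"
  have JCJ: "v \<in> jacobson UNIV" if v: "v \<in> jacobson center" for v :: 'a
  proof (rule J_crit[OF subr_UNIV], simp, rule ballI)
    fix x :: 'a
    obtain c j where cj: "c \<in> center" "j \<in> jacobson UNIV" "x = c + j" using h by blast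
    have vc: "v \<in> center" using v jac_mem by blast
    have "c*v \<in> jacobson center" using jac_left[OF subr_center cj(1) v] .
    then obtain w where w: "w \<in> center" "w*(1-c*v) = 1" using J_left_inv[OF subr_center] by blast
    have jv: "j*v = v*j" using vc unfolding center_def by simp
    have "w*(1 - x*v) = w*(1-c*v) - w*(j*v)" using cj(3) by (simp add: algebra_simps)
    also have "\<dots> = 1 - (w*v)*j" using w jv by (simp add: mult.assoc)
    finally have eq: "w*(1 - x*v) = 1 - (w*v)*j" .
    have "(w*v)*j \<in> jacobson UNIV" using jac_left[OF subr_UNIV _ cj(2)] by blast
    then obtain z where "z*(1 - (w*v)*j) = 1" using J_left_inv[OF subr_UNIV] by blast
    hence "(z*w)*(1 - x*v) = 1" using eq by (simp add: mult.assoc)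
    thus "\<exists>w\<in>UNIV. w*(1 - x*v) = 1" by blast
  qed
  show "strongly_J_star_clean star"
    unfolding strongly_J_star_clean_def
  proof
    fix a :: 'a
    obtain c j where cj: "c \<in> center" "j \<in> jacobson UNIV" "a = c + j" using h by blast
    obtain e v where ev: "e \<in> center" "v \<in> jacobson center" "is_projection star e" "c = e + v"
      using h cj(1) unfolding J_star_clean_in_def by blast
    have "v + j \<in> jacobson UNIV" using jac_add[OF subr_UNIV JCJ[OF ev(2)] cj(2)] .
    moreover have "a = e + (v + j)" using cj ev by (simp add: add.assoc)
    moreover have "a*e = e*a" using ev(1) unfolding center_def by simp
    ultimately show "\<exists>e u. is_projection star e \<and> u \<in> jacobson UNIV \<and> a*e = e*a \<and> a = e + u"
      using ev(3) by blast
  qed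
qed

end
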